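(* Let $b_1,\dots,b_m\in\mathbb{R}^d$ be linearly independent, let $\mathcal{B}=[b_1\ \cdots\ b_m]\in\mathbb{R}^{d\times m}$, and let $\Lambda(\mathcal{B})=\{\sum_{i=1}^mc_ib_i: c_i\in\mathbb{Z}\}$. Let $L\subset\mathbb{R}^d$ be a finite set, $D,T>0$, and $$\widetilde{k}:=\big|\{f\in\Lambda(\mathcal{B}): \exists f'\in L,\ \|f'-f\|_2<D/T\}\big|.$$ Then (spectral bound) $\widetilde{k}\le|L|\cdot(1+2D/(T\sigma_{\min}(\mathcal{B})))^m$, and (volume bound) $$\widetilde{k}\le|L|\cdot(D/T+\sqrt{m}\|\mathcal{B}\|)^m\cdot\frac{\pi^{m/2}}{(m/2)!}\cdot\frac{1}{|\det(\mathcal{B})|}.$$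
   Context: $\sigma_{\min}(\mathcal{B})$ is the smallest singular value of $\mathcal{B}$, $\|\mathcal{B}\|$ is its spectral norm, $(m/2)!$ denotes $\Gamma(m/2+1)$, and $|\det(\mathcal{B})|$ denotes the $m$-dimensional volume $\sqrt{\det(\mathcal{B}^\top\mathcal{B})}$ of the fundamental parallelepiped $\{\mathcal{B}x: x\in[0,1)^m\}$ (equal to the usual $|\det\mathcal{B}|$ when $m=d$). *)

theory Defs
  imports "HOL-Analysis.Analysis"
begin

text \<open>A d x m real matrix B (type real^'m^'d) whose columns are b_1..b_m.\<close>

definition lattice :: "real^'m^'d \<Rightarrow> (real^'d) set" where
  "lattice B = {B *v c | c. \<forall>i. c $ i \<in> \<int>}"

definition sigma_min :: "real^'m^'d \<Rightarrow> real" where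
  "sigma_min B = sqrt (Min {l. \<exists>v. v \<noteq> 0 \<and> (transpose B ** B) *v v = l *\<^sub>R v})"

definition spec_norm :: "real^'m^'d \<Rightarrow> real" where
  "spec_norm B = onorm (\<lambda>x. B *v x)"

text \<open>m-dimensional volume of the fundamental parallelepiped: sqrt(det(B^T B)).\<close>
definition vol_det :: "real^'m^'d \<Rightarrow> real" where
  "vol_det B = sqrt (det (transpose B ** B))"

end

theory Submission
  imports Defs "HOL-Library.Countable_Set" "HOL-Combinatorics.Permutations"
begin

typedef 'a widx = "UNIV :: 'a set" by auto

instance widx :: (finite) finite
proof
  have "(UNIV :: 'a widx set) = Abs_widx ` UNIV"
    by (metis Abs_widx_cases surjI surj_def)
  then show "finite (UNIV :: 'a widx set)" by (metis finite finite_imageI)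
qed

instantiation widx :: (finite) linorder
begin
definition less_eq_widx :: "'a widx \<Rightarrow> 'a widx \<Rightarrow> bool" where
  "less_eq_widx x y = (to_nat_on (UNIV::'a set) (Rep_widx x) \<le> to_nat_on (UNIV::'a set) (Rep_widx y))"
definition less_widx :: "'a widx \<Rightarrow> 'a widx \<Rightarrow> bool" where
  "less_widx x y = (to_nat_on (UNIV::'a set) (Rep_widx x) < to_nat_on (UNIV::'a set) (Rep_widx y))"
instance
proof
  have inj: "inj (to_nat_on (UNIV::'a set))"
    by (simp add: inj_on_to_nat_on)
  fix x y z :: "'a widx"
  show "(x < y) = (x \<le> y \<and> \<not> y \<le> x)" by (auto simp: less_eq_widx_def less_widx_def)
  show "x \<le> x" by (simp add: less_eq_widx_def)
  show "x \<le> y \<Longrightarrow> y \<le> z \<Longrightarrow> x \<le> z" by (simp add: less_eq_widx_def)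
  show "x \<le> y \<Longrightarrow> y \<le> x \<Longrightarrow> x = y"
    using inj by (simp add: less_eq_widx_def Rep_widx_inject inj_eq)
  show "x \<le> y \<or> y \<le> x" by (auto simp: less_eq_widx_def)
qed
end

instance widx :: (finite) wellorder
proof
  fix P :: "'a widx \<Rightarrow> bool" and a
  assume H: "\<And>x. (\<And>y. y < x \<Longrightarrow> P y) \<Longrightarrow> P x"
  have "\<forall>x. to_nat_on (UNIV::'a set) (Rep_widx x) = n \<longrightarrow> P x" for n
  proof (induction n rule: less_induct)
    case (less n)
    then show ?case using H by (auto simp: less_widx_def)
  qed
  then show "P a" by blast
qed

lemma card_widx: "CARD('a::finite widx) = CARD('a)"
  by (metis (mono_tags, lifting) Abs_widx_inverse Rep_widx_inverse UNIV_I bij_betw_byWitness card_bij_eq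
    finite inj_on_def subset_UNIV bij_betw_same_card)

lemma det_reindex:
  fixes G :: "real^'m^'m" and r :: "'k::finite \<Rightarrow> 'm"
  assumes r: "bij r"
  shows "det (\<chi> i j. G $ r i $ r j :: real^'k^'k) = det G"
proof -
  let ?h = "\<lambda>q. map_permutation UNIV r q"
  have injr: "inj_on r UNIV" using r bij_is_inj by blast
  have happ: "?h q (r i) = r (q i)" for q i
    by (rule map_permutation_apply[OF injr]) simp
  have bij: "bij_betw ?h {q. q permutes (UNIV::'k set)} {p. p permutes (UNIV::'m set)}"
  proof (rule bij_betw_imageI)
    show "inj_on ?h {q. q permutes (UNIV::'k set)}"
    proof (rule inj_onI)
      fix q q' assume "?h q = ?h q'"
      then have "r (q i) = r (q' i)" for i by (metis happ)
      then show "q = q'" using injr by (auto simp: inj_on_def)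
    qed
    show "?h ` {q. q permutes (UNIV::'k set)} = {p. p permutes (UNIV::'m set)}"
    proof
      show "?h ` {q. q permutes UNIV} \<subseteq> {p. p permutes UNIV}"
        using map_permutation_permutes[of r UNIV UNIV] r by (auto simp: bij_betw_def)
      show "{p. p permutes UNIV} \<subseteq> ?h ` {q. q permutes UNIV}"
      proof
        fix p :: "'m \<Rightarrow> 'm" assume p: "p \<in> {p. p permutes UNIV}"
        define q where "q = inv r \<circ> p \<circ> r"
        have "q permutes UNIV"
          unfolding q_def using p r
          by (auto intro!: bij_imp_permutes bij_comp bij_imp_bij_inv simp: permutes_bij)
        moreover have "?h q = p"
        proof
          fix a
          obtain i where "a = r i" using r by (metis bij_pointE)
          then show "?h q a = p a" using happ r by (simp add: q_def bij_inv_eq_iff surj_f_inv_f bij_is_surj)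
        qed
        ultimately show "p \<in> ?h ` {q. q permutes UNIV}" by blast
      qed
    qed
  qed
  have "det G = (\<Sum>p\<in>{p. p permutes (UNIV::'m set)}. of_int (sign p) * (\<Prod>a\<in>UNIV. G $ a $ p a))"
    by (simp add: det_def)
  also have "\<dots> = (\<Sum>q\<in>{q. q permutes (UNIV::'k set)}. of_int (sign (?h q)) * (\<Prod>a\<in>UNIV. G $ a $ ?h q a))"
    by (rule sum.reindex_bij_betw[OF bij, symmetric])
  also have "\<dots> = (\<Sum>q\<in>{q. q permutes (UNIV::'k set)}. of_int (sign q) * (\<Prod>i\<in>UNIV. G $ r i $ r (q i)))"
  proof (rule sum.cong[OF refl])
    fix q :: "'k \<Rightarrow> 'k" assume q: "q \<in> {q. q permutes UNIV}"
    have "sign (?h q) = sign q" using sign_map_permutation[OF injr] q by simp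
    moreover have "(\<Prod>a\<in>UNIV. G $ a $ ?h q a) = (\<Prod>i\<in>UNIV. G $ r i $ r (q i))"
    proof -
      have "(\<Prod>a\<in>UNIV. G $ a $ ?h q a) = (\<Prod>a\<in>r ` UNIV. G $ a $ ?h q a)"
        using r by (simp add: bij_def)
      also have "\<dots> = (\<Prod>i\<in>UNIV. G $ r i $ ?h q (r i))"
        using prod.reindex[OF injr, of "\<lambda>a. G $ a $ ?h q a"] by (simp add: o_def)
      finally show ?thesis by (simp add: happ)
    qed
    ultimately show "of_int (sign (?h q)) * (\<Prod>a\<in>UNIV. G $ a $ ?h q a) =
        of_int (sign q) * (\<Prod>i\<in>UNIV. G $ r i $ r (q i))" by simp
  qed
  also have "\<dots> = det (\<chi> i j. G $ r i $ r j :: real^'k^'k)"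
    by (simp add: det_def)
  finally show ?thesis by simp
qed

lemma inner_transpose_mult:
  fixes B :: "real^'m^'d"
  shows "x \<bullet> ((transpose B ** B) *v y) = (B *v x) \<bullet> (B *v y)"
proof -
  have "(transpose B ** B) *v y = transpose B *v (B *v y)"
    by (simp add: matrix_vector_mul_assoc)
  also have "\<dots> = (B *v y) v* B" by simp
  finally have "x \<bullet> ((transpose B ** B) *v y) = ((B *v y) v* B) \<bullet> x" by (simp add: inner_commute)
  also have "\<dots> = (B *v y) \<bullet> (B *v x)" by (rule dot_lmul_matrix)
  finally show ?thesis by (simp add: inner_commute)
qed

lemma sigma_min_props:
  fixes B :: "real^'m^'d"
  assumes indep: "inj (\<lambda>c. B *v c)"
  shows "sigma_min B > 0 \<and> (\<forall>x. sigma_min B * norm x \<le> norm (B *v x))"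
proof -
  define G where "G = transpose B ** B"
  define E where "E = {l. \<exists>v. v \<noteq> 0 \<and> G *v v = l *\<^sub>R v}"
  have sm: "sigma_min B = sqrt (Min E)" by (simp add: sigma_min_def E_def G_def)
  have Bnz: "B *v v \<noteq> 0" if "v \<noteq> 0" for v
    using indep that by (metis injD matrix_vector_mult_0_right)
  have form: "x \<bullet> (G *v y) = (B *v x) \<bullet> (B *v y)" for x y
    unfolding G_def by (rule inner_transpose_mult)
  have Epos: "l > 0" if lE: "l \<in> E" for l
  proof -
    obtain v where v: "v \<noteq> 0" "G *v v = l *\<^sub>R v" using lE E_def by auto
    have "l * (v \<bullet> v) = (B *v v) \<bullet> (B *v v)" using form[of v v] v by simp
    moreover have "(B *v v) \<bullet> (B *v v) > 0" using Bnz[OF v(1)] by simp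
    moreover have "v \<bullet> v > 0" using v(1) by simp
    ultimately show ?thesis by (metis zero_less_mult_pos2 order_less_le)
  qed
  define ev where "ev l = (SOME v. v \<noteq> 0 \<and> G *v v = l *\<^sub>R v)" for l
  have ev: "ev l \<noteq> 0 \<and> G *v ev l = l *\<^sub>R ev l" if "l \<in> E" for l
    using that unfolding E_def ev_def by (rule CollectE) (rule someI_ex)
  have orth: "ev l1 \<bullet> ev l2 = 0" if "l1 \<in> E" "l2 \<in> E" "l1 \<noteq> l2" for l1 l2
  proof -
    have "l2 * (ev l1 \<bullet> ev l2) = ev l1 \<bullet> (G *v ev l2)" using ev[OF that(2)] by simp
    also have "\<dots> = (B *v ev l1) \<bullet> (B *v ev l2)" by (rule form)
    also have "\<dots> = ev l2 \<bullet> (G *v ev l1)" by (simp add: form inner_commute)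
    also have "\<dots> = l1 * (ev l1 \<bullet> ev l2)" using ev[OF that(1)] by (simp add: inner_commute)
    finally show ?thesis using that(3) by simp
  qed
  have injev: "inj_on ev E"
  proof (rule inj_onI)
    fix l1 l2 assume h: "l1 \<in> E" "l2 \<in> E" "ev l1 = ev l2"
    then have "l1 *\<^sub>R ev l1 = l2 *\<^sub>R ev l1" using ev by metis
    then show "l1 = l2" using ev[OF h(1)] by simp
  qed
  have "pairwise orthogonal (ev ` E)"
    unfolding pairwise_def orthogonal_def using orth by auto
  moreover have "0 \<notin> ev ` E" using ev by auto
  ultimately have "independent (ev ` E)" by (rule pairwise_orthogonal_independent)
  then have "finite (ev ` E)" by (rule finiteI_independent)
  then have finE: "finite E" using injev finite_imageD by blast
  let ?q = "\<lambda>x. (B *v x) \<bullet> (B *v x)"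
  have "sphere (0::real^'m) 1 \<noteq> {}"
    by (metis ex_in_conv mem_sphere_0 norm_axis_1)
  moreover have "continuous_on (sphere (0::real^'m) 1) ?q"
    by (intro continuous_intros linear_continuous_on matrix_vector_mul_linear linear_linear)
  ultimately obtain x0 where x0: "x0 \<in> sphere 0 1" and x0min: "\<And>y. y \<in> sphere 0 1 \<Longrightarrow> ?q x0 \<le> ?q y"
    using continuous_attains_inf[of "sphere (0::real^'m) 1" ?q] by auto
  define \<mu> where "\<mu> = ?q x0"
  have nx0: "norm x0 = 1" using x0 by simp
  have qge: "\<mu> * (x \<bullet> x) \<le> ?q x" for x
  proof (cases "x = 0")
    case True then show ?thesis by simp
  next
    case False
    let ?y = "(1 / norm x) *\<^sub>R x"
    have "?y \<in> sphere 0 1" using False by simp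
    then have "\<mu> \<le> ?q ?y" using x0min \<mu>_def by blast
    also have "?q ?y = ?q x / (norm x)^2"
      by (simp add: matrix_vector_mult_scaleR power2_eq_square)
    finally have "\<mu> * (norm x)^2 \<le> ?q x" using False by (simp add: field_simps)
    then show ?thesis by (simp add: power2_norm_eq_inner)
  qed
  have mu0: "\<mu> \<ge> 0" unfolding \<mu>_def by simp
  define w where "w = G *v x0 - \<mu> *\<^sub>R x0"
  define a where "a = w \<bullet> w"
  define b where "b = ?q w - \<mu> * (w \<bullet> w)"
  have b0: "b \<ge> 0" using qge[of w] b_def by simp
  have key: "2 * t * a + t^2 * b \<ge> 0" for t
  proof -
    have "0 \<le> ?q (x0 + t *\<^sub>R w) - \<mu> * ((x0 + t *\<^sub>R w) \<bullet> (x0 + t *\<^sub>R w))"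
      using qge[of "x0 + t *\<^sub>R w"] by simp
    also have "\<dots> = (?q x0 - \<mu> * (x0 \<bullet> x0)) + 2 * t * ((B *v x0) \<bullet> (B *v w) - \<mu> * (x0 \<bullet> w))
        + t^2 * b"
      by (simp add: b_def matrix_vector_right_distrib matrix_vector_mult_scaleR inner_add_left
          inner_add_right inner_commute power2_eq_square algebra_simps)
    also have "?q x0 - \<mu> * (x0 \<bullet> x0) = 0"
      using nx0 by (simp add: \<mu>_def power2_norm_eq_inner[symmetric])
    also have "(B *v x0) \<bullet> (B *v w) - \<mu> * (x0 \<bullet> w) = a"
      using form[of w x0] by (simp add: a_def w_def inner_diff_left inner_commute)
    finally show ?thesis by simp
  qed
  have "a = 0"
  proof (rule ccontr)
    assume "a \<noteq> 0"
    then have apos: "a > 0" using a_def by simp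
    define t where "t = - a / (b + 1)"
    have "2 * t * a + t^2 * b = - (a^2 * (b + 2)) / (b + 1)^2"
    proof -
      have bp: "b + 1 \<noteq> 0" using b0 by simp
      show ?thesis unfolding t_def using bp
        by (simp add: power2_eq_square divide_simps) (simp add: algebra_simps)
    qed
    also have "\<dots> < 0" using apos b0 by (simp add: divide_neg_pos)
    finally show False using key[of t] by simp
  qed
  then have "w = 0" by (simp add: a_def)
  then have "G *v x0 = \<mu> *\<^sub>R x0" by (simp add: w_def)
  moreover have "x0 \<noteq> 0" using nx0 by auto
  ultimately have muE: "\<mu> \<in> E" unfolding E_def by blast
  have minle: "Min E \<le> \<mu>" using finE muE by simp
  have minE: "Min E \<in> E" using finE muE by (metis Min_in empty_iff)
  have "sigma_min B > 0" using sm Epos[OF minE] by simp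
  moreover have "sigma_min B * norm x \<le> norm (B *v x)" for x
  proof -
    have "sigma_min B * norm x \<le> sqrt \<mu> * norm x"
      using sm minle by (simp add: mult_right_mono)
    also have "\<dots> = sqrt (\<mu> * (x \<bullet> x))" by (simp add: real_sqrt_mult norm_eq_sqrt_inner)
    also have "\<dots> \<le> sqrt (?q x)" using qge by simp
    also have "\<dots> = norm (B *v x)" by (simp add: norm_eq_sqrt_inner)
    finally show ?thesis .
  qed
  ultimately show ?thesis by blast
qed

lemma Ints_abs_less1_eq:
  fixes a b :: real
  assumes "a \<in> \<int>" "b \<in> \<int>" "\<bar>a - b\<bar> < 1" shows "a = b"
proof -
  have "a - b \<in> \<int>" using assms by simp
  then show ?thesis using assms(3) Ints_nonzero_abs_less1 by force
qed

lemma int_vec_dist: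
  fixes c c' :: "real^'k"
  assumes "\<forall>i. c $ i \<in> \<int>" "\<forall>i. c' $ i \<in> \<int>" "c \<noteq> c'"
  shows "norm (c - c') \<ge> 1"
proof -
  obtain i where i: "c $ i \<noteq> c' $ i" using assms(3) by (metis vec_eq_iff)
  have "\<bar>c $ i - c' $ i\<bar> \<ge> 1"
    using Ints_abs_less1_eq[of "c $ i" "c' $ i"] assms i by force
  also have "\<bar>c $ i - c' $ i\<bar> \<le> norm (c - c')"
    using component_le_norm_cart[of "c - c'" i] by simp
  finally show ?thesis .
qed

lemma measure_lebesgue_ball_cart:
  assumes "r \<ge> 0" shows "measure lebesgue (ball (c::real^'k) r) = unit_ball_vol (CARD('k)) * r ^ CARD('k)"
proof -
  have "measure lebesgue (ball c r) = measure lborel (ball c r)"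
    by (simp)
  then show ?thesis using content_ball[OF assms, of c] by simp
qed

lemma measure_lebesgue_cball_cart:
  assumes "r \<ge> 0" shows "measure lebesgue (cball (c::real^'k) r) = unit_ball_vol (CARD('k)) * r ^ CARD('k)"
proof -
  have "measure lebesgue (cball c r) = measure lborel (cball c r)"
    by (simp)
  then show ?thesis using content_ball[OF assms, of c] content_cball_conv_ball[of c r] by simp
qed

lemma pack_spec:
  fixes A :: "real^'k \<Rightarrow> real^'k" and C :: "(real^'k) set"
  assumes lin: "linear A" and sig: "\<sigma> > 0" and lb: "\<And>x. \<sigma> * norm x \<le> norm (A x)"
    and fin: "finite C" and int: "\<And>c. c \<in> C \<Longrightarrow> \<forall>i. c $ i \<in> \<int>"
    and close: "\<And>c. c \<in> C \<Longrightarrow> norm (A c - g) < r" and r0: "r \<ge> 0"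
  shows "real (card C) * (\<sigma>/2) ^ CARD('k) \<le> (r + \<sigma>/2) ^ CARD('k)"
proof -
  let ?f = "\<lambda>c. ball (A c) (\<sigma>/2)"
  have sep: "norm (A c - A c') \<ge> \<sigma>" if "c \<in> C" "c' \<in> C" "c \<noteq> c'" for c c'
  proof -
    have "\<sigma> * 1 \<le> \<sigma> * norm (c - c')"
      using int_vec_dist[of c c'] int that sig by (intro mult_left_mono) auto
    also have "\<dots> \<le> norm (A (c - c'))" by (rule lb)
    also have "A (c - c') = A c - A c'" using lin by (simp add: linear_diff)
    finally show ?thesis by simp
  qed
  have disj: "pairwise (\<lambda>x y. negligible (?f x \<inter> ?f y)) C"
  proof (rule pairwiseI)
    fix c c' assume h: "c \<in> C" "c' \<in> C" "c \<noteq> c'"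
    have "?f c \<inter> ?f c' = {}"
    proof (rule ccontr)
      assume "?f c \<inter> ?f c' \<noteq> {}"
      then obtain x where "dist (A c) x < \<sigma>/2" "dist (A c') x < \<sigma>/2" by auto
      then have "dist (A c) (A c') < \<sigma>" by (metis dist_commute dist_triangle_half_l)
      then show False using sep[OF h] by (simp add: dist_norm)
    qed
    then show "negligible (?f c \<inter> ?f c')" by simp
  qed
  have "measure lebesgue (\<Union>(?f ` C)) = (\<Sum>c\<in>C. measure lebesgue (?f c))"
    by (rule measure_negligible_finite_Union_image[OF fin _ disj]) simp
  also have "\<dots> = real (card C) * (unit_ball_vol (CARD('k)) * (\<sigma>/2) ^ CARD('k))"
  proof -
    have h: "\<And>c. measure lebesgue (?f c) = unit_ball_vol (CARD('k)) * (\<sigma>/2) ^ CARD('k)"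
      by (rule measure_lebesgue_ball_cart) (use sig in simp)
    show ?thesis by (simp only: h sum_constant)
  qed
  finally have eq: "measure lebesgue (\<Union>(?f ` C)) = real (card C) * (unit_ball_vol (CARD('k)) * (\<sigma>/2) ^ CARD('k))" .
  have sub: "\<Union>(?f ` C) \<subseteq> ball g (r + \<sigma>/2)"
  proof
    fix x assume "x \<in> \<Union>(?f ` C)"
    then obtain c where c: "c \<in> C" "dist (A c) x < \<sigma>/2" by auto
    have "dist g x \<le> dist g (A c) + dist (A c) x" by (rule dist_triangle)
    also have "dist g (A c) < r" using close[OF c(1)] by (simp add: dist_norm norm_minus_commute)
    finally show "x \<in> ball g (r + \<sigma>/2)" using c by simp
  qed
  have "measure lebesgue (\<Union>(?f ` C)) \<le> measure lebesgue (ball g (r + \<sigma>/2))"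
    by (rule measure_mono_fmeasurable[OF sub]) (use fin in auto)
  then have "real (card C) * (unit_ball_vol (CARD('k)) * (\<sigma>/2) ^ CARD('k))
      \<le> unit_ball_vol (CARD('k)) * (r + \<sigma>/2) ^ CARD('k)"
  proof -
    have "measure lebesgue (ball g (r + \<sigma>/2)) = unit_ball_vol (CARD('k)) * (r + \<sigma>/2) ^ CARD('k)"
      by (rule measure_lebesgue_ball_cart) (use sig r0 in simp)
    then show ?thesis using \<open>measure lebesgue (\<Union>(?f ` C)) \<le> _\<close> eq by simp
  qed
  moreover have "unit_ball_vol (CARD('k)) > 0" by simp
  ultimately show ?thesis by (simp add: mult.left_commute[of "real (card C)"])
qed

lemma norm_unit_box_le:
  fixes t :: "real^'k"
  assumes "\<And>i. 0 \<le> t $ i \<and> t $ i \<le> 1"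
  shows "norm t \<le> sqrt (real CARD('k))"
proof -
  have "norm t = sqrt (\<Sum>i\<in>UNIV. (t $ i)^2)"
    by (simp add: norm_vec_def L2_set_def)
  also have "\<dots> \<le> sqrt (\<Sum>i\<in>(UNIV::'k set). 1)"
  proof (rule real_sqrt_le_mono, rule sum_mono)
    fix i show "(t $ i)^2 \<le> 1" using assms[of i] by (simp add: power_le_one)
  qed
  finally show ?thesis by simp
qed

lemma pack_vol:
  fixes A :: "real^'k::{finite,wellorder} \<Rightarrow> real^'k::{finite,wellorder}" and C :: "(real^'k::{finite,wellorder}) set"
  assumes lin: "linear A" and ub: "\<And>x. norm (A x) \<le> K * norm x" and K0: "K \<ge> 0"
    and fin: "finite C" and int: "\<And>c. c \<in> C \<Longrightarrow> \<forall>i. c $ i \<in> \<int>"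
    and close: "\<And>c. c \<in> C \<Longrightarrow> norm (A c - g) < r" and r0: "r \<ge> 0"
  shows "\<bar>det (matrix A)\<bar> * real (card C)
     \<le> unit_ball_vol (CARD('k)) * (r + sqrt (real CARD('k)) * K) ^ CARD('k)"
proof -
  define one :: "real^'k::{finite,wellorder}" where "one = (\<chi> i. 1)"
  let ?f = "\<lambda>c. box c (c + one)"
  have disj: "pairwise (\<lambda>x y. negligible (?f x \<inter> ?f y)) C"
  proof (rule pairwiseI)
    fix c c' assume h: "c \<in> C" "c' \<in> C" "c \<noteq> c'"
    have "?f c \<inter> ?f c' = {}"
    proof (rule ccontr)
      assume "?f c \<inter> ?f c' \<noteq> {}"
      then obtain x where x: "x \<in> ?f c" "x \<in> ?f c'" by auto
      have "c $ i = c' $ i" for i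
      proof (rule Ints_abs_less1_eq)
        show "c $ i \<in> \<int>" "c' $ i \<in> \<int>" using int h by auto
        have "c $ i < x $ i \<and> x $ i < c $ i + 1" "c' $ i < x $ i \<and> x $ i < c' $ i + 1"
          using x by (auto simp: mem_box_cart one_def)
        then show "\<bar>c $ i - c' $ i\<bar> < 1" by linarith
      qed
      then show False using h(3) by (simp add: vec_eq_iff)
    qed
    then show "negligible (?f c \<inter> ?f c')" by simp
  qed
  have m1: "measure lebesgue (?f c) = 1" for c
  proof -
    have "measure lebesgue (?f c) = measure lborel (?f c)" by simp
    also have "\<dots> = 1"
    proof -
      have b: "one \<bullet> b = 1" if "b \<in> Basis" for b :: "real^'k::{finite,wellorder}"
        using that by (auto simp: Basis_vec_def inner_axis one_def)
      show ?thesis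
        by (subst measure_lborel_box_eq) (simp add: inner_add_left b prod.neutral)
    qed
    finally show ?thesis .
  qed
  have U: "measure lebesgue (\<Union>(?f ` C)) = real (card C)"
    by (subst measure_negligible_finite_Union_image[OF fin _ disj]) (simp_all add: m1)
  have Um: "\<Union>(?f ` C) \<in> lmeasurable"
    using fin by (intro fmeasurable.finite_UN) auto
  have img: "measure lebesgue (A ` \<Union>(?f ` C)) = \<bar>det (matrix A)\<bar> * real (card C)"
    using measure_linear_image[OF lin Um] U by simp
  have imgm: "A ` \<Union>(?f ` C) \<in> lmeasurable"
    using measurable_linear_image[OF lin Um] .
  define R where "R = r + sqrt (real CARD('k)) * K"
  have sub: "A ` \<Union>(?f ` C) \<subseteq> cball g R"
  proof
    fix y assume "y \<in> A ` \<Union>(?f ` C)"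
    then obtain c x where c: "c \<in> C" "x \<in> ?f c" "y = A x" by auto
    define t where "t = x - c"
    have t01: "0 \<le> t $ i \<and> t $ i \<le> 1" for i
    proof -
      have "c $ i < x $ i \<and> x $ i < c $ i + 1" using c(2) by (auto simp: mem_box_cart one_def)
      then show ?thesis by (simp add: t_def)
    qed
    have "A x = A c + A t" using lin by (simp add: t_def linear_diff)
    then have "norm (A x - g) \<le> norm (A c - g) + norm (A t)"
      by (metis add.commute add_diff_eq norm_triangle_ineq diff_add_eq)
    also have "norm (A t) \<le> K * norm t" by (rule ub)
    also have "K * norm t \<le> K * sqrt (real CARD('k))"
      using norm_unit_box_le[OF t01] K0 by (rule mult_left_mono)
    finally have "norm (A x - g) \<le> R" using close[OF c(1)] by (simp add: R_def mult.commute)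
    then show "y \<in> cball g R" using c by (simp add: dist_norm norm_minus_commute)
  qed
  have "measure lebesgue (A ` \<Union>(?f ` C)) \<le> measure lebesgue (cball g R)"
    by (rule measure_mono_fmeasurable[OF sub]) (use imgm in auto)
  also have "measure lebesgue (cball g R) = unit_ball_vol (CARD('k)) * R ^ CARD('k)"
    by (rule measure_lebesgue_cball_cart) (use r0 K0 in \<open>simp add: R_def\<close>)
  finally show ?thesis using img by (simp add: R_def)
qed

lemma bounded_card:
  assumes "\<And>C. finite C \<Longrightarrow> C \<subseteq> X \<Longrightarrow> real (card C) \<le> K"
  shows "finite X \<and> real (card X) \<le> K"
proof (cases "finite X")
  case True then show ?thesis using assms by blast
next
  case False
  obtain C where C: "C \<subseteq> X" "finite C" "card C = nat \<lceil>K\<rceil> + 1"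
    using infinite_arbitrarily_large[OF False] by blast
  have "real (card C) > K" using C(3) by linarith
  then show ?thesis using assms C by force
qed

lemma tt_entry:
  fixes X :: "real^'a^'b"
  shows "(transpose X ** X) $ i $ j = (X *v axis i 1) \<bullet> (X *v axis j 1)"
  by (simp add: matrix_matrix_mult_def transpose_def matrix_vector_mult_basis column_def inner_vec_def)

lemma isometry_inner:
  assumes lin: "linear f" and V: "subspace V" and iso: "\<And>x. x \<in> V \<Longrightarrow> norm (f x) = norm x"
    and u: "u \<in> V" and v: "v \<in> V"
  shows "f u \<bullet> f v = u \<bullet> v"
proof -
  have "norm (f (u + v))^2 = norm (u + v)^2" using iso V u v by (simp add: subspace_add)
  moreover have "f (u + v) = f u + f v" using lin by (simp add: linear_add)
  ultimately have "(f u + f v) \<bullet> (f u + f v) = (u + v) \<bullet> (u + v)" by (simp add: power2_norm_eq_inner)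
  moreover have "f u \<bullet> f u = u \<bullet> u" "f v \<bullet> f v = v \<bullet> v"
    using iso u v by (simp_all add: power2_norm_eq_inner[symmetric])
  ultimately show ?thesis by (simp add: inner_add_left inner_add_right inner_commute)
qed

theorem lemma10p2:
  fixes B :: "real^'m^'d" and L :: "(real^'d) set" and D T :: real
  assumes indep: "inj (\<lambda>c. B *v c)"
    and finL: "finite L" and D: "D > 0" and T: "T > 0"
  defines "kt \<equiv> card {f \<in> lattice B. \<exists>f'\<in>L. norm (f' - f) < D / T}"
  shows "real kt \<le> real (card L) * (1 + 2 * D / (T * sigma_min B)) ^ CARD('m)
    \<and> real kt \<le> real (card L) * (D / T + sqrt (real CARD('m)) * spec_norm B) ^ CARD('m)
                   * (pi powr (real CARD('m) / 2) / Gamma (real CARD('m) / 2 + 1))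
                   * (1 / vol_det B)"
proof -
  define r where "r = D / T"
  have r0: "r > 0" using D T by (simp add: r_def)
  define n where "n = CARD('m)"
  have cardk: "CARD('m widx) = n" by (simp add: n_def card_widx)
  define \<psi> :: "real^'m widx \<Rightarrow> real^'m" where "\<psi> y = (\<chi> a. y $ Abs_widx a)" for y
  define \<phi> :: "real^'m \<Rightarrow> real^'m widx" where "\<phi> x = (\<chi> j. x $ Rep_widx j)" for x
  have \<psi>\<phi>: "\<psi> (\<phi> x) = x" for x by (simp add: \<psi>_def \<phi>_def Abs_widx_inverse vec_eq_iff)
  have lin\<psi>: "linear \<psi>"
    by (rule linearI) (simp_all add: \<psi>_def vec_eq_iff)
  have norm\<psi>: "norm (\<psi> y) = norm y" for y
  proof -
    have "(\<Sum>a\<in>UNIV. (y $ Abs_widx a)^2) = (\<Sum>j\<in>UNIV. (y $ j)^2)"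
    proof (rule sum.reindex_bij_witness[of _ Rep_widx Abs_widx])
    qed (simp_all add: Abs_widx_inverse Rep_widx_inverse)
    then show ?thesis by (simp add: norm_vec_def L2_set_def \<psi>_def)
  qed
  have int\<psi>: "\<forall>a. \<psi> y $ a \<in> \<int>" if "\<forall>i. y $ i \<in> \<int>" for y
    using that by (simp add: \<psi>_def)
  have int\<phi>: "\<forall>j. \<phi> x $ j \<in> \<int>" if "\<forall>i. x $ i \<in> \<int>" for x
    using that by (simp add: \<phi>_def)
  have \<psi>axis: "\<psi> (axis i 1) = axis (Rep_widx i) 1" for i
    by (auto simp: \<psi>_def vec_eq_iff axis_def Abs_widx_inverse Rep_widx_inverse)
  define V where "V = range (\<lambda>c. B *v c)"
  have subV: "subspace V" unfolding V_def subspace_def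
  proof (intro conjI ballI allI)
    show "0 \<in> range (\<lambda>c. B *v c)" by (metis matrix_vector_mult_0_right rangeI)
    fix x y assume "x \<in> range (\<lambda>c. B *v c)" "y \<in> range (\<lambda>c. B *v c)"
    then obtain a b where "x = B *v a" "y = B *v b" by auto
    then show "x + y \<in> range (\<lambda>c. B *v c)"
      by (metis matrix_vector_right_distrib rangeI)
  next
    fix c :: real and x assume "x \<in> range (\<lambda>c. B *v c)"
    then obtain a where "x = B *v a" by auto
    then show "c *\<^sub>R x \<in> range (\<lambda>c. B *v c)"
      by (metis matrix_vector_mult_scaleR rangeI)
  qed
  have dimV: "dim V = n"
  proof -
    have "dim V = dim (UNIV :: (real^'m) set)" unfolding V_def
      by (rule dim_image_eq) (use indep in \<open>auto simp: inj_on_def inj_def\<close>)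
    then show ?thesis by (simp add: n_def)
  qed
  have dimk: "dim (UNIV :: (real^'m widx) set) = n" by (simp add: cardk)
  have subk: "subspace (UNIV :: (real^'m widx) set)" by simp
  have dimeq: "dim V = dim (UNIV :: (real^'m widx) set)" using dimV dimk by simp
  obtain f g where lf: "linear f" and lg: "linear g" and fV: "f ` V = UNIV" and gV: "g ` UNIV = V"
    and fiso: "\<And>x. x \<in> V \<Longrightarrow> norm (f x) = norm x"
    and giso: "\<And>x. x \<in> UNIV \<Longrightarrow> norm (g x) = norm (x :: real^'m widx)"
    and gf: "\<And>x. x \<in> V \<Longrightarrow> g (f x) = x" and fg: "\<And>x. x \<in> UNIV \<Longrightarrow> f (g x) = (x :: real^'m widx)"
    by (rule isometries_subspaces[OF subV subk dimeq]) blast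
  define A where "A y = f (B *v \<psi> y)" for y
  have inV: "B *v x \<in> V" for x by (simp add: V_def)
  have linA: "linear A" unfolding A_def
    using linear_compose[OF linear_compose[OF lin\<psi> matrix_vector_mul_linear] lf]
    by (simp add: o_def)
  have normA: "norm (A y) = norm (B *v \<psi> y)" for y by (simp add: A_def fiso inV)
  obtain \<sigma> where sig: "\<sigma> = sigma_min B" by blast
  have sigpos: "\<sigma> > 0" and siglb: "\<And>x. \<sigma> * norm x \<le> norm (B *v x)"
    using sigma_min_props[OF indep] sig by auto
  have Alb: "\<sigma> * norm y \<le> norm (A y)" for y using siglb[of "\<psi> y"] by (simp add: normA norm\<psi>)
  have blB: "bounded_linear (\<lambda>x. B *v x)"
    by (simp add: linear_conv_bounded_linear)
  have K0: "spec_norm B \<ge> 0" unfolding spec_norm_def by (rule onorm_pos_le[OF blB])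
  have Aub: "norm (A y) \<le> spec_norm B * norm y" for y
    using onorm[OF blB, of "\<psi> y"] by (simp add: normA norm\<psi> spec_norm_def)
  define M where "M = matrix A"
  have MA: "M *v y = A y" for y using matrix_vector_mul(2)[OF linA] by (simp add: M_def fun_eq_iff)
  have "transpose M ** M = (\<chi> i j. (transpose B ** B) $ Rep_widx i $ Rep_widx j)"
  proof -
    have "(transpose M ** M) $ i $ j = (transpose B ** B) $ Rep_widx i $ Rep_widx j" for i j
    proof -
      have "(transpose M ** M) $ i $ j = A (axis i 1) \<bullet> A (axis j 1)" by (simp add: tt_entry MA)
      also have "\<dots> = (B *v \<psi> (axis i 1)) \<bullet> (B *v \<psi> (axis j 1))"
        unfolding A_def by (rule isometry_inner[OF lf subV fiso inV inV])
      also have "\<dots> = (transpose B ** B) $ Rep_widx i $ Rep_widx j"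
        by (simp add: tt_entry \<psi>axis)
      finally show ?thesis .
    qed
    then show ?thesis by (simp add: vec_eq_iff)
  qed
  then have "det (transpose M ** M) = det (transpose B ** B)"
    using det_reindex[of Rep_widx "transpose B ** B"]
    by (simp add: bij_def inj_def Rep_widx_inject surj_def) (metis Abs_widx_inverse UNIV_I)
  then have volM: "vol_det B = \<bar>det M\<bar>"
    by (simp add: vol_det_def det_mul power2_eq_square[symmetric]) (metis real_sqrt_abs)
  have injA: "inj A"
  proof (rule injI)
    fix a b assume "A a = A b"
    then have "A (a - b) = 0" using linA by (simp add: linear_diff)
    then have "B *v \<psi> (a - b) = 0" using normA[of "a - b"] by simp
    then have "\<psi> (a - b) = 0" using indep by (metis injD matrix_vector_mult_0_right)
    then show "a = b" using norm\<psi>[of "a - b"] by simp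
  qed
  have detpos: "\<bar>det M\<bar> > 0"
    using injA det_nz_iff_inj[OF linA] by (simp add: M_def)
  define bnd1 where "bnd1 = (1 + 2 * D / (T * sigma_min B)) ^ CARD('m)"
  define bnd2 where "bnd2 = (D / T + sqrt (real CARD('m)) * spec_norm B) ^ CARD('m)
                   * (pi powr (real CARD('m) / 2) / Gamma (real CARD('m) / 2 + 1))
                   * (1 / vol_det B)"
  define S where "S f' = {f \<in> lattice B. norm (f' - f) < D / T}" for f'
  have Sbound: "real (card (S f')) \<le> bnd1 \<and> real (card (S f')) \<le> bnd2" for f'
  proof -
    obtain y z where y: "y \<in> span V" and z: "\<And>w. w \<in> span V \<Longrightarrow> orthogonal z w"
      and fyz: "f' = y + z"
      using orthogonal_subspace_decomp_exists[of V f'] by metis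
    have spanV: "span V = V" using subV span_eq_iff by blast
    have yV: "y \<in> V" using y spanV by simp
    have proj: "norm (B *v x - y) \<le> norm (f' - B *v x)" for x
    proof -
      have "orthogonal (y - B *v x) z"
        using z[of "y - B *v x"] yV inV subV
        by (simp add: spanV subspace_diff orthogonal_commute)
      then have "norm ((y - B *v x) + z)^2 = norm (y - B *v x)^2 + norm z^2"
        by (rule norm_add_Pythagorean)
      then have "norm (y - B *v x)^2 \<le> norm (f' - B *v x)^2"
        by (simp add: fyz algebra_simps)
      then show ?thesis by (simp add: norm_minus_commute power2_le_iff_abs_le)
    qed
    define gg where "gg = f y"
    have Aclose: "norm (A c - gg) \<le> norm (f' - B *v \<psi> c)" for c
    proof -
      have "A c - gg = f (B *v \<psi> c - y)" using lf by (simp add: A_def gg_def linear_diff)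
      then have "norm (A c - gg) = norm (B *v \<psi> c - y)"
        using fiso subV yV inV by (simp add: subspace_diff)
      then show ?thesis using proj by simp
    qed
    define X where "X = {c :: real^'m widx. (\<forall>i. c $ i \<in> \<int>) \<and> norm (f' - B *v \<psi> c) < r}"
    have SX: "S f' = (\<lambda>c. B *v \<psi> c) ` X"
    proof
      show "S f' \<subseteq> (\<lambda>c. B *v \<psi> c) ` X"
      proof
        fix v assume "v \<in> S f'"
        then obtain x where x: "\<forall>i. x $ i \<in> \<int>" "v = B *v x" "norm (f' - v) < r"
          by (auto simp: S_def lattice_def r_def)
        then have "\<phi> x \<in> X" using int\<phi>[OF x(1)] by (simp add: X_def \<psi>\<phi>)
        then show "v \<in> (\<lambda>c. B *v \<psi> c) ` X" using x(2) \<psi>\<phi> by (metis image_eqI)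
      qed
      show "(\<lambda>c. B *v \<psi> c) ` X \<subseteq> S f'"
        using int\<psi> by (auto simp: S_def lattice_def X_def r_def)
    qed
    have injX: "inj_on (\<lambda>c. B *v \<psi> c) X"
    proof (rule inj_onI)
      fix a b assume "B *v \<psi> a = B *v \<psi> b"
      then have "\<psi> a = \<psi> b" using indep by (metis injD)
      then have "\<psi> (a - b) = 0" using lin\<psi> by (simp add: linear_diff)
      then show "a = b" using norm\<psi>[of "a - b"] by simp
    qed
    have cardS: "card (S f') = card X" using SX card_image[OF injX] by simp
    have b1: "finite X \<and> real (card X) \<le> bnd1"
    proof (rule bounded_card)
      fix C assume C: "finite C" "C \<subseteq> X"
      have "real (card C) * (\<sigma>/2) ^ CARD('m widx) \<le> (r + \<sigma>/2) ^ CARD('m widx)"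
      proof (rule pack_spec[OF linA sigpos Alb C(1)])
        show "\<forall>i. c $ i \<in> \<int>" if "c \<in> C" for c using that C(2) by (auto simp: X_def)
        show "norm (A c - gg) < r" if "c \<in> C" for c
          using that C(2) Aclose[of c] by (auto simp: X_def)
      qed (use r0 in simp)
      moreover have "r + \<sigma>/2 = (\<sigma>/2) * (1 + 2 * r / \<sigma>)" using sigpos by (simp add: field_simps)
      ultimately have "real (card C) * (\<sigma>/2) ^ n \<le> ((\<sigma>/2) * (1 + 2 * r / \<sigma>)) ^ n"
        by (simp only: cardk)
      then have "real (card C) * (\<sigma>/2) ^ n \<le> (1 + 2 * r / \<sigma>) ^ n * (\<sigma>/2) ^ n"
        by (simp only: power_mult_distrib mult.commute)
      moreover have "(\<sigma>/2) ^ n > 0" using sigpos by simp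
      ultimately have "real (card C) \<le> (1 + 2 * r / \<sigma>) ^ n"
        by (meson mult_le_cancel_right_pos)
      then show "real (card C) \<le> bnd1"
        by (simp add: bnd1_def r_def sig n_def)
    qed
    have b2: "finite X \<and> real (card X) \<le> bnd2"
    proof (rule bounded_card)
      fix C assume C: "finite C" "C \<subseteq> X"
      have "\<bar>det (matrix A)\<bar> * real (card C)
         \<le> unit_ball_vol (CARD('m widx)) * (r + sqrt (real CARD('m widx)) * spec_norm B) ^ CARD('m widx)"
      proof (rule pack_vol[OF linA Aub K0 C(1)])
        show "\<forall>i. c $ i \<in> \<int>" if "c \<in> C" for c using that C(2) by (auto simp: X_def)
        show "norm (A c - gg) < r" if "c \<in> C" for c
          using that C(2) Aclose[of c] by (auto simp: X_def)
      qed (use r0 in simp)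
      then have "vol_det B * real (card C)
         \<le> unit_ball_vol n * (r + sqrt (real n) * spec_norm B) ^ n"
        by (simp add: cardk volM M_def)
      then have "real (card C) \<le> unit_ball_vol n * (r + sqrt (real n) * spec_norm B) ^ n / vol_det B"
        using detpos volM by (simp add: field_simps)
      then show "real (card C) \<le> bnd2"
        by (simp add: bnd2_def r_def n_def unit_ball_vol_def field_simps)
    qed
    show ?thesis using b1 b2 cardS by simp
  qed
  have eqU: "{f \<in> lattice B. \<exists>f'\<in>L. norm (f' - f) < D / T} = (\<Union>f'\<in>L. S f')"
    by (auto simp: S_def)
  have "real kt \<le> real (\<Sum>f'\<in>L. card (S f'))"
    unfolding kt_def eqU using card_UN_le[OF finL] by (simp only: of_nat_le_iff)
  also have "\<dots> = (\<Sum>f'\<in>L. real (card (S f')))" by simp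
  finally have kt: "real kt \<le> (\<Sum>f'\<in>L. real (card (S f')))" .
  have "(\<Sum>f'\<in>L. real (card (S f'))) \<le> real (card L) * bnd1"
    using sum_bounded_above[of L "\<lambda>f'. real (card (S f'))" bnd1] Sbound by auto
  moreover have "(\<Sum>f'\<in>L. real (card (S f'))) \<le> real (card L) * bnd2"
    using sum_bounded_above[of L "\<lambda>f'. real (card (S f'))" bnd2] Sbound by auto
  ultimately show ?thesis using kt unfolding bnd1_def bnd2_def by (simp add: mult.assoc)
qed

end
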